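(* Let $n \geq 1$ be an integer and consider Nim on the hypercube $Q_{2n+1}$ in which every edge has weight $1$, with the playing piece $\Delta$ starting at the vertex $\emptyset$. Then the first player $P_1$ has a winning strategy.
   Context: Nim on a graph: two players agree on a finite simple undirected graph $G$ whose edges carry positive integer weights, and a starting vertex on which a playing piece $\Delta$ is placed. Players $P_1$ (who moves first) and $P_2$ alternate. On a turn, the player chooses an edge of positive weight incident with the vertex currently holding $\Delta$, lowers that edge's weight by a positive integer amount, and moves $\Delta$ to the other endpoint of that edge. Edges of weight $0$ are no longer playable. A player who cannot move (no playable edge is incident with $\Delta$) loses. With unit weight, each edge can be traversed at most once in total. The hypercube $Q_m$ has as vertices the subsets $X \subseteq \{1,\dots,m\}$, two vertices being adjacent iff they differ in exactly one element; $\emptyset$ denotes the empty set (by vertex-transitivity the choice of starting vertex is immaterial). *)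

theory Defs
  imports Main
begin

text \<open>A graph is given by its edge set E, a set of 2-element
vertex sets (finite simple undirected graph). A position is the vertex holding
the playing piece together with the current weight function on edges.\<close>

definition nim_move ::
  "'a set set \<Rightarrow> ('a \<times> ('a set \<Rightarrow> nat)) \<Rightarrow> ('a \<times> ('a set \<Rightarrow> nat)) \<Rightarrow> bool" where
  "nim_move E p q \<longleftrightarrow>
     (\<exists>u d. u \<noteq> fst p \<and> {fst p, u} \<in> E \<and> 0 < snd p {fst p, u} \<and>
            0 < d \<and> d \<le> snd p {fst p, u} \<and>
            q = (u, (snd p)({fst p, u} := snd p {fst p, u} - d)))"

text \<open>Least fixed point = winning in finitely many moves.\<close>

inductive nim_win and nim_lose for E :: "'a set set" where
  win_intro: "nim_move E p q \<Longrightarrow> nim_lose E q \<Longrightarrow> nim_win E p"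
| lose_intro: "(\<And>q. nim_move E p q \<Longrightarrow> nim_win E q) \<Longrightarrow> nim_lose E p"

definition hypercube_edges :: "nat \<Rightarrow> nat set set set" where
  "hypercube_edges m = {{X, Y} | X Y. X \<subseteq> {1..m} \<and> Y \<subseteq> {1..m} \<and>
                         card ((X - Y) \<union> (Y - X)) = 1}"

definition unit_weights :: "'a set set \<Rightarrow> 'a set \<Rightarrow> nat" where
  "unit_weights E = (\<lambda>e. if e \<in> E then 1 else 0)"

end

theory Submission imports Defs begin
lemma hc_mem: "e \<in> hypercube_edges m \<longleftrightarrow> (\<exists>X Y. e = {X,Y} \<and> X \<subseteq> {1..m} \<and> Y \<subseteq> {1..m} \<and> card ((X - Y) \<union> (Y - X)) = 1)"
  unfolding hypercube_edges_def by (rule iffI) (simp_all only: mem_Collect_eq)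

lemma hc_edge: "{X,Y} \<in> hypercube_edges m \<longleftrightarrow> X \<subseteq> {1..m} \<and> Y \<subseteq> {1..m} \<and> card ((X - Y) \<union> (Y - X)) = 1"
proof
  assume "{X,Y} \<in> hypercube_edges m"
  then have "\<exists>X' Y'. {X,Y} = {X',Y'} \<and> X' \<subseteq> {1..m} \<and> Y' \<subseteq> {1..m} \<and> card ((X' - Y') \<union> (Y' - X')) = 1"
    by (simp only: hc_mem)
  then obtain X' Y' where h: "{X,Y} = {X',Y'}" "X' \<subseteq> {1..m}" "Y' \<subseteq> {1..m}"
      "card ((X' - Y') \<union> (Y' - X')) = 1"
    by (elim exE conjE) iprover
  from h(1) have "(X = X' \<and> Y = Y') \<or> (X = Y' \<and> Y = X')" by (simp add: doubleton_eq_iff)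
  then show "X \<subseteq> {1..m} \<and> Y \<subseteq> {1..m} \<and> card ((X - Y) \<union> (Y - X)) = 1"
  proof
    assume "X = X' \<and> Y = Y'" then show ?thesis using h by simp
  next
    assume a: "X = Y' \<and> Y = X'"
    have "(X - Y) \<union> (Y - X) = (X' - Y') \<union> (Y' - X')" using a by blast
    then show ?thesis using h a by simp
  qed
next
  assume "X \<subseteq> {1..m} \<and> Y \<subseteq> {1..m} \<and> card ((X - Y) \<union> (Y - X)) = 1"
  then show "{X,Y} \<in> hypercube_edges m" unfolding hc_mem by (intro exI[of _ X] exI[of _ Y]) simp
qed
lemma nbr1:
  assumes "card (({i} - u) \<union> (u - {i})) = 1"
  shows "u = {} \<or> (\<exists>j. j \<noteq> i \<and> u = {i,j})"
proof -
  obtain k where k: "({i} - u) \<union> (u - {i}) = {k}" using assms by (elim card_1_singletonE)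
  show ?thesis
  proof (cases "i \<in> u")
    case True
    then have "{i} - u = {}" by simp
    then have uk: "u - {i} = {k}" using k by simp
    then have "k \<noteq> i" by auto
    have "u = insert i (u - {i})" using True by (rule insert_Diff[symmetric])
    then have "u = {i,k}" using uk by simp
    then show ?thesis using \<open>k \<noteq> i\<close> by auto
  next
    case False
    then have "{i} - u = {i}" "u - {i} = u" by auto
    then have "insert i u = {k}" using k by simp
    then have "u \<subseteq> {i}" by auto
    then have "u = {}" using False by auto
    then show ?thesis by simp
  qed
qed

lemma finE: "finite (hypercube_edges m)"
proof -
  have "hypercube_edges m \<subseteq> Pow (Pow {1..m})"
  proof
    fix e assume "e \<in> hypercube_edges m"
    then have "\<exists>X Y. e = {X,Y} \<and> X \<subseteq> {1..m} \<and> Y \<subseteq> {1..m} \<and> card ((X - Y) \<union> (Y - X)) = 1"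
      by (simp only: hc_mem)
    then obtain X Y where "e = {X,Y}" "X \<subseteq> {1..m}" "Y \<subseteq> {1..m}" by (elim exE conjE) iprover
    then show "e \<in> Pow (Pow {1..m})" by simp
  qed
  then show ?thesis by (rule finite_subset) simp
qed

definition Zs :: "nat \<Rightarrow> (nat set set \<Rightarrow> nat) \<Rightarrow> nat set" where
  "Zs m w = {i\<in>{1..m}. w {{}, {i}} = 0}"

definition bal :: "(nat set set \<Rightarrow> nat) \<Rightarrow> nat set \<Rightarrow> bool" where
  "bal w c \<longleftrightarrow> (\<forall>a b. a \<noteq> b \<longrightarrow> {a,b} \<noteq> c \<longrightarrow> (w {{a},{a,b}} = 0 \<longleftrightarrow> w {{b},{a,b}} = 0))"

definition wle :: "nat \<Rightarrow> (nat set set \<Rightarrow> nat) \<Rightarrow> bool" where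
  "wle m w \<longleftrightarrow> (\<forall>e. w e \<le> unit_weights (hypercube_edges m) e)"

definition Inv1 :: "nat \<Rightarrow> nat set \<Rightarrow> (nat set set \<Rightarrow> nat) \<Rightarrow> bool" where
  "Inv1 m c w \<longleftrightarrow> wle m w \<and> bal w c \<and>
     ((c = {} \<and> even (card (Zs m w))) \<or>
      (\<exists>a b. a \<noteq> b \<and> c = {a,b} \<and> w {{a},{a,b}} = 0 \<and> 0 < w {{b},{a,b}} \<and> odd (card (Zs m w))))"

definition Inv2 :: "nat \<Rightarrow> nat set \<Rightarrow> (nat set set \<Rightarrow> nat) \<Rightarrow> bool" where
  "Inv2 m c w \<longleftrightarrow> wle m w \<and> bal w {} \<and> (\<exists>i. c = {i}) \<and> odd (card (Zs m w))"

definition mu :: "nat \<Rightarrow> (nat set set \<Rightarrow> nat) \<Rightarrow> nat" where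
  "mu m w = card {e \<in> hypercube_edges m. 0 < w e}"

lemma wle_pos: "wle m w \<Longrightarrow> 0 < w e \<Longrightarrow> e \<in> hypercube_edges m \<and> w e = 1"
  unfolding wle_def unit_weights_def
  by (metis (full_types) bot_nat_0.extremum_uniqueI le_neq_implies_less less_one not_less_zero)

lemma wle_upd:
  assumes "wle m w" shows "wle m (w(e := w e - d))"
  unfolding wle_def
proof
  fix e' show "(w(e := w e - d)) e' \<le> unit_weights (hypercube_edges m) e'"
    using assms unfolding wle_def by (cases "e' = e") (auto intro: order_trans[OF diff_le_self])
qed

lemma mu_dec:
  assumes "e \<in> hypercube_edges m" "0 < w e"
  shows "mu m (w(e := 0)) < mu m w"
  unfolding mu_def
proof (rule psubset_card_mono)
  show "finite {e \<in> hypercube_edges m. 0 < w e}" using finE by auto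
  show "{e' \<in> hypercube_edges m. 0 < (w(e := 0)) e'} \<subset> {e \<in> hypercube_edges m. 0 < w e}"
    using assms by auto
qed

lemma Zs_fin: "finite (Zs m w)" unfolding Zs_def by auto

lemma Zs_upd0:
  assumes "i \<in> {1..m}" "0 < w {{},{i}}"
  shows "Zs m (w({{},{i}} := 0)) = insert i (Zs m w)" "i \<notin> Zs m w"
  using assms unfolding Zs_def by (auto simp: doubleton_eq_iff)

lemma Zs_other:
  assumes "{} \<notin> e"
  shows "Zs m (w(e := x)) = Zs m w"
  using assms unfolding Zs_def by auto

lemma bal_other:
  assumes "bal w c" "\<And>a b. a \<noteq> b \<Longrightarrow> {a,b} \<noteq> c \<Longrightarrow> e \<noteq> {{a},{a,b}} \<and> e \<noteq> {{b},{a,b}}"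
  shows "bal (w(e := x)) c"
  using assms unfolding bal_def by auto

lemma E3:
  assumes "{{p'},q'} = {{p},q}" "card q' = 2" "card q = 2"
  shows "q' = q \<and> p' = p"
proof -
  from assms(1) have "({p'} = {p} \<and> q' = q) \<or> ({p'} = q \<and> q' = {p})" by (simp only: doubleton_eq_iff)
  then show ?thesis using assms(2,3) by auto
qed

lemma E4:
  assumes "Y \<noteq> {}" shows "{{},X} \<noteq> {{a},Y}"
proof
  assume h: "{{},X} = {{a},Y}"
  have "{} \<in> {{},X}" by simp
  then have "{} \<in> {{a},Y}" by (simp only: h)
  then show False using assms by simp
qed

lemma E4ab: "{{},X} \<noteq> {{a},{a,b}}" "{{},X} \<noteq> {{b},{a,b}}"
  by (rule E4, simp)+

lemma balD:
  assumes "bal w c" "x \<noteq> y" "{x,y} \<noteq> c"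
  shows "(w {{x},{x,y}} = 0 \<longleftrightarrow> w {{y},{x,y}} = 0)"
proof -
  have "\<forall>a b. a \<noteq> b \<longrightarrow> {a,b} \<noteq> c \<longrightarrow> (w {{a},{a,b}} = 0 \<longleftrightarrow> w {{b},{a,b}} = 0)"
    using assms(1) unfolding bal_def .
  then have "x \<noteq> y \<longrightarrow> {x,y} \<noteq> c \<longrightarrow> (w {{x},{x,y}} = 0 \<longleftrightarrow> w {{y},{x,y}} = 0)"
    by (elim allE)
  then show ?thesis using assms(2,3) by iprover
qed

lemma bal_any:
  assumes "bal w {}" shows "bal w c"
  unfolding bal_def
proof (intro allI impI)
  fix a b :: nat assume "a \<noteq> b" "{a,b} \<noteq> c"
  then show "(w {{a},{a,b}} = 0) = (w {{b},{a,b}} = 0)" using balD[OF assms \<open>a \<noteq> b\<close>] by simp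
qed

lemma ne_ab: "a \<noteq> b \<Longrightarrow> {{a},{a,b}} \<noteq> {{b},{a,b}}"
proof
  assume "a \<noteq> b" "{{a},{a,b}} = {{b},{a,b}}"
  then have "{a,b} = {a,b} \<and> a = b" using E3[of a "{a,b}" b "{a,b}"] by simp
  then show False using \<open>a \<noteq> b\<close> by simp
qed

lemma ne_pair:
  assumes "x \<noteq> y" "a \<noteq> b" "{x,y} \<noteq> {a,b}"
  shows "{{x},{x,y}} \<noteq> {{p},{a,b}}" "{{y},{x,y}} \<noteq> {{p},{a,b}}"
proof -
  show "{{x},{x,y}} \<noteq> {{p},{a,b}}"
  proof
    assume "{{x},{x,y}} = {{p},{a,b}}"
    then have "{x,y} = {a,b}" using E3[of x "{x,y}" p "{a,b}"] assms by simp
    then show False using assms by simp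
  qed
  show "{{y},{x,y}} \<noteq> {{p},{a,b}}"
  proof
    assume "{{y},{x,y}} = {{p},{a,b}}"
    then have "{x,y} = {a,b}" using E3[of y "{x,y}" p "{a,b}"] assms by simp
    then show False using assms by simp
  qed
qed

lemma main:
  assumes "odd m"
  shows "(Inv1 m c w \<longrightarrow> nim_win (hypercube_edges m) (c,w)) \<and>
         (Inv2 m c w \<longrightarrow> nim_lose (hypercube_edges m) (c,w))"
proof (induction "mu m w" arbitrary: c w rule: less_induct)
  case less
  let ?E = "hypercube_edges m"
  show ?case
  proof (intro conjI impI)
    assume I: "Inv1 m c w"
    then have wl: "wle m w" and bw: "bal w c" unfolding Inv1_def by auto
    obtain u where mv: "u \<noteq> c" "{c,u} \<in> ?E" "0 < w {c,u}" and I2: "Inv2 m u (w({c,u} := 0))"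
    proof -
      from I consider (z) "c = {}" "even (card (Zs m w))"
        | (t) a b where "a \<noteq> b" "c = {a,b}" "w {{a},{a,b}} = 0" "0 < w {{b},{a,b}}" "odd (card (Zs m w))"
        unfolding Inv1_def by (elim conjE disjE exE; iprover)
      then show ?thesis
      proof cases
        case z
        have "Zs m w \<noteq> {1..m}"
        proof
          assume "Zs m w = {1..m}"
          then have "card (Zs m w) = m" by simp
          with z assms show False by simp
        qed
        moreover have "Zs m w \<subseteq> {1..m}" unfolding Zs_def by auto
        ultimately have "\<exists>i. i \<in> {1..m} \<and> i \<notin> Zs m w" by auto
        then obtain i where i: "i \<in> {1..m}" "i \<notin> Zs m w" by (elim exE conjE) iprover
        then have pos: "0 < w {{},{i}}" unfolding Zs_def by auto
        have ed: "{{},{i}} \<in> ?E" using i by (simp add: hc_edge)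
        have ce: "{c,{i}} = {{},{i}}" using z by simp
        show ?thesis
        proof (rule that[of "{i}"])
          show "{i} \<noteq> c" using z by simp
          show "{c,{i}} \<in> ?E" using ce ed by simp
          show "0 < w {c,{i}}" using ce pos by simp
          have "Zs m (w({{},{i}} := 0)) = insert i (Zs m w)" using Zs_upd0 i pos by blast
          then have "odd (card (Zs m (w({{},{i}} := 0))))" using z i Zs_fin by simp
          moreover have "bal (w({{},{i}} := 0)) {}"
          proof (rule bal_other)
            show "bal w {}" using bw z by simp
          qed (simp add: E4ab)
          moreover have "wle m (w({{},{i}} := 0))" using wle_upd[OF wl, of "{{},{i}}" "w {{},{i}}"] by simp
          ultimately show "Inv2 m {i} (w({c, {i}} := 0))" unfolding Inv2_def ce by auto
        qed
      next
        case t
        have ce: "{c,{b}} = {{b},{a,b}}" unfolding t(2) by (rule insert_commute)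
        have ed: "{{b},{a,b}} \<in> ?E" using wle_pos[OF wl t(4)] by simp
        have ne: "{{a},{a,b}} \<noteq> {{b},{a,b}}" using ne_ab[OF t(1)] .
        show ?thesis
        proof (rule that[of "{b}"])
          show "{b} \<noteq> c"
          proof
            assume "{b} = c"
            then have "a \<in> {b}" using t(2) by simp
            then show False using t(1) by simp
          qed
          show "{c,{b}} \<in> ?E" using ce ed by simp
          show "0 < w {c,{b}}" using ce t by simp
          have "Zs m (w({{b},{a,b}} := 0)) = Zs m w" by (rule Zs_other) simp
          moreover have "bal (w({{b},{a,b}} := 0)) {}"
            unfolding bal_def
          proof (intro allI impI)
            fix x y :: nat assume xy: "x \<noteq> y" "{x,y} \<noteq> {}"
            show "((w({{b},{a,b}} := 0)) {{x},{x,y}} = 0) = ((w({{b},{a,b}} := 0)) {{y},{x,y}} = 0)"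
            proof (cases "{x,y} = {a,b}")
              case True
              then have "(x = a \<and> y = b) \<or> (x = b \<and> y = a)" by (simp only: doubleton_eq_iff)
              moreover have h1: "(w({{b},{a,b}} := 0)) {{a},{a,b}} = 0" using ne t(3) by simp
              moreover have h2: "(w({{b},{a,b}} := 0)) {{b},{a,b}} = 0" by simp
              moreover have ba: "{b,a} = {a,b}" by (rule insert_commute)
              ultimately show ?thesis
              proof (elim disjE conjE)
                assume "x = a" "y = b" then show ?thesis using h1 h2 by simp
              next
                assume "x = b" "y = a" then show ?thesis using h1 h2 ba by simp
              qed
            next
              case False
              have n1: "{{x},{x,y}} \<noteq> {{b},{a,b}}" "{{y},{x,y}} \<noteq> {{b},{a,b}}"
                using ne_pair[OF xy(1) t(1) False] by auto
              have "(w {{x},{x,y}} = 0) = (w {{y},{x,y}} = 0)"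
                using balD[OF bw xy(1)] False t(2) by simp
              then show ?thesis using n1 by simp
            qed
          qed
          moreover have "wle m (w({{b},{a,b}} := 0))" using wle_upd[OF wl, of "{{b},{a,b}}" "w {{b},{a,b}}"] by simp
          ultimately show "Inv2 m {b} (w({c, {b}} := 0))" unfolding Inv2_def ce using t(5) by auto
        qed
      qed
    qed
    have "mu m (w({c,u} := 0)) < mu m w" using mu_dec[of "{c,u}" m w, OF mv(2) mv(3)] .
    then have "(Inv1 m u (w({c,u} := 0)) \<longrightarrow> nim_win ?E (u, w({c,u} := 0))) \<and>
         (Inv2 m u (w({c,u} := 0)) \<longrightarrow> nim_lose ?E (u, w({c,u} := 0)))" by (rule less(1))
    then have L: "nim_lose ?E (u, w({c,u} := 0))" using I2 by iprover
    have "nim_move ?E (c,w) (u, w({c,u} := 0))"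
      unfolding nim_move_def using mv by (intro exI[of _ u] exI[of _ "w {c,u}"]) simp
    then show "nim_win ?E (c,w)" using L by (rule win_intro)
  next
    assume I: "Inv2 m c w"
    then have wl: "wle m w" and bw: "bal w {}" and oz: "odd (card (Zs m w))" and ci: "\<exists>i. c = {i}"
      unfolding Inv2_def by auto
    from ci obtain i where ci: "c = {i}" by (elim exE) iprover
    show "nim_lose ?E (c,w)"
    proof (rule lose_intro)
      fix q assume "nim_move ?E (c,w) q"
      then obtain u d where u: "u \<noteq> c" "{c,u} \<in> ?E" "0 < w {c,u}" "0 < d" "d \<le> w {c,u}"
        and q: "q = (u, w({c,u} := w {c,u} - d))"
        unfolding nim_move_def by auto
      have w1: "w {c,u} = 1" using wle_pos[OF wl u(3)] by simp
      then have q': "q = (u, w({c,u} := 0))" using q u by simp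
      have "mu m (w({c,u} := 0)) < mu m w" using mu_dec[of "{c,u}" m w, OF u(2) u(3)] .
      then have "(Inv1 m u (w({c,u} := 0)) \<longrightarrow> nim_win ?E (u, w({c,u} := 0))) \<and>
         (Inv2 m u (w({c,u} := 0)) \<longrightarrow> nim_lose ?E (u, w({c,u} := 0)))" by (rule less(1))
      then have IH: "Inv1 m u (w({c,u} := 0)) \<Longrightarrow> nim_win ?E (u, w({c,u} := 0))" by iprover
      have "{i} \<subseteq> {1..m} \<and> u \<subseteq> {1..m} \<and> card (({i} - u) \<union> (u - {i})) = 1"
        using u(2) unfolding ci hc_edge .
      then have sd: "card (({i} - u) \<union> (u - {i})) = 1" and im: "i \<in> {1..m}" by auto
      have wle': "wle m (w({c,u} := 0))" using wle_upd[OF wl, of "{c,u}" "w {c,u}"] by simp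
      have "Inv1 m u (w({c,u} := 0))"
      proof -
        from nbr1[OF sd] consider (z) "u = {}" | (t) j where "j \<noteq> i" "u = {i,j}"
          by (elim disjE exE conjE; iprover)
        then show ?thesis
        proof cases
          case z
          have e: "{c,u} = {{},{i}}" unfolding ci z by (rule insert_commute)
          have p0: "0 < w {{},{i}}" using u(3) e by simp
          have "Zs m (w({{},{i}} := 0)) = insert i (Zs m w)" "i \<notin> Zs m w"
            using Zs_upd0[of i m w, OF im p0] by auto
          then have "even (card (Zs m (w({c,u} := 0))))" using e oz Zs_fin by simp
          moreover have "bal (w({c,u} := 0)) u"
            unfolding e
          proof (rule bal_other)
            show "bal w u" using bw z by simp
          qed (simp add: E4ab)
          ultimately show ?thesis unfolding Inv1_def using wle' z by auto
        next
          case t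
          have e: "{c,u} = {{i},{i,j}}" unfolding ci t(2) ..
          have pi: "0 < w {{i},{i,j}}" using u(3) e by simp
          have pj: "0 < w {{j},{i,j}}"
          proof -
            have "(w {{i},{i,j}} = 0) = (w {{j},{i,j}} = 0)" using balD[OF bw t(1)[symmetric]] by simp
            then show ?thesis using pi by simp
          qed
          have "{{j},{i,j}} \<noteq> {{i},{i,j}}"
          proof
            assume "{{j},{i,j}} = {{i},{i,j}}"
            then have "j = i" using E3[of j "{i,j}" i "{i,j}"] t(1) by simp
            then show False using t(1) by simp
          qed
          then have pj': "0 < (w({c,u} := 0)) {{j},{i,j}}" using pj e by simp
          have z0: "(w({c,u} := 0)) {{i},{i,j}} = 0" using e by simp
          have zs: "Zs m (w({c,u} := 0)) = Zs m w" unfolding e by (rule Zs_other) simp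
          have bl: "bal (w({c,u} := 0)) u"
            unfolding e
          proof (rule bal_other)
            show "bal w u" using bw by (rule bal_any)
          next
            fix a b :: nat assume ab: "a \<noteq> b" "{a,b} \<noteq> u"
            then have "{a,b} \<noteq> {i,j}" using t(2) by simp
            then have nab: "{i,j} \<noteq> {a,b}" by auto
            show "{{i},{i,j}} \<noteq> {{a},{a,b}} \<and> {{i},{i,j}} \<noteq> {{b},{a,b}}"
              using ne_pair(1)[OF t(1)[symmetric] ab(1) nab, of a] ne_pair(1)[OF t(1)[symmetric] ab(1) nab, of b]
              by (rule conjI)
          qed
          have "\<exists>a b. a \<noteq> b \<and> u = {a,b} \<and> (w({c,u} := 0)) {{a},{a,b}} = 0 \<and>
                   0 < (w({c,u} := 0)) {{b},{a,b}} \<and> odd (card (Zs m (w({c,u} := 0))))"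
            by (intro exI[of _ i] exI[of _ j] conjI) (use t z0 pj' zs oz in simp_all)
          then show ?thesis unfolding Inv1_def using wle' bl by iprover
        qed
      qed
      then show "nim_win ?E q" using IH q' by simp
    qed
  qed
qed

theorem mainTheorem2:
  fixes n :: nat
  assumes "n \<ge> 1"
  shows "nim_win (hypercube_edges (2 * n + 1))
           ({} :: nat set, unit_weights (hypercube_edges (2 * n + 1)))"
proof -
  let ?m = "2 * n + 1"
  let ?w = "unit_weights (hypercube_edges ?m)"
  have "Zs ?m ?w = {}"
    unfolding Zs_def unit_weights_def by (auto simp: hc_edge)
  moreover have "bal ?w {}"
    unfolding bal_def unit_weights_def by (auto simp: hc_edge insert_commute)
  moreover have "wle ?m ?w" unfolding wle_def by simp
  ultimately have "Inv1 ?m {} ?w" unfolding Inv1_def by simp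
  then show ?thesis using main[of ?m "{}" ?w] by simp
qed

end
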